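(* Let $n\ge1$ and let $f$ be an automorphism of the additive group $\mathbb{Z}^n$. Then: 1. If $f$ has a cycle of length $k$ other than the zero cycle $\{0\}$, then $f$ has infinitely many cycles of length $k$. 2. If $f$ has a chain, then $f$ has infinitely many chains. 3. If each standard basis vector $e_i$ ($1\le i\le n$) lies in a cycle of $f$, then every element of $\mathbb{Z}^n$ lies in a cycle of $f$, i.e., $f$ has no chains.
   Context: For a bijection $f$ of a set $A$, a cycle is a finite sequence $a_1,\dots,a_m$ of distinct elements with $f(a_j)=a_{j+1}$ for $j<m$ and $f(a_m)=a_1$ (length $m$); a chain is a two-sided infinite sequence $\dots,a_{-1},a_0,a_1,\dots$ of distinct elements with $f(a_j)=a_{j+1}$ for all $j$. Every element lies in exactly one cycle or chain. For an automorphism of $\mathbb{Z}^n$, the zero cycle is the fixed point $0$. $e_i\in\mathbb{Z}^n$ has $1$ in coordinate $i$ and $0$ elsewhere. *)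

theory Defs
  imports "HOL-Analysis.Analysis"
begin

definition is_aut :: "(int ^ 'n \<Rightarrow> int ^ 'n) \<Rightarrow> bool" where
  "is_aut f \<longleftrightarrow> bij f \<and> (\<forall>x y. f (x + y) = f x + f y)"

definition in_cycle_len :: "('a \<Rightarrow> 'a) \<Rightarrow> nat \<Rightarrow> 'a \<Rightarrow> bool" where
  "in_cycle_len f k a \<longleftrightarrow> 0 < k \<and> (f ^^ k) a = a \<and> (\<forall>j. 0 < j \<and> j < k \<longrightarrow> (f ^^ j) a \<noteq> a)"

definition in_cycle :: "('a \<Rightarrow> 'a) \<Rightarrow> 'a \<Rightarrow> bool" where
  "in_cycle f a \<longleftrightarrow> (\<exists>k. in_cycle_len f k a)"

text \<open>The cycles of f of length k, each represented by its (finite) set of elements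
  {a, f a, ..., f^(k-1) a} (a cycle up to rotation is determined by this set).\<close>
definition cycles_len :: "('a \<Rightarrow> 'a) \<Rightarrow> nat \<Rightarrow> 'a set set" where
  "cycles_len f k = {{(f ^^ j) a | j. j < k} | a. in_cycle_len f k a}"

text \<open>The chain of a bijection f through a point a: {f^j a | j \<in> Z}.\<close>
definition chain_through :: "('a \<Rightarrow> 'a) \<Rightarrow> 'a \<Rightarrow> 'a set" where
  "chain_through f a = {(f ^^ j) a | j. True} \<union> {(inv f ^^ j) a | j. True}"

definition chains :: "('a \<Rightarrow> 'a) \<Rightarrow> 'a set set" where
  "chains f = {chain_through f a | a. \<not> in_cycle f a}"

end

theory Submission
  imports Defs
begin

definition addh :: "(int ^ 'n \<Rightarrow> int ^ 'n) \<Rightarrow> bool" where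
  "addh f \<longleftrightarrow> (\<forall>x y. f (x + y) = f x + f y)"

lemma addh_zero: "addh f \<Longrightarrow> f 0 = 0"
proof -
  assume "addh f"
  then have "f (0 + 0) = f 0 + f 0" unfolding addh_def by blast
  then show ?thesis by simp
qed

lemma addh_neg: "addh f \<Longrightarrow> f (- x) = - f x"
proof -
  assume a: "addh f"
  then have "f (x + - x) = f x + f (- x)" unfolding addh_def by blast
  then have "0 = f x + f (-x)" using addh_zero[OF a] by simp
  then show ?thesis by (simp add: eq_neg_iff_add_eq_0 add.commute)
qed

lemma addh_nat: "addh f \<Longrightarrow> f (int m *s x) = int m *s f x"
proof (induction m)
  case 0
  then show ?case using addh_zero by simp
next
  case (Suc m)
  have "int (Suc m) *s x = x + int m *s x" by (simp add: vector_sadd_rdistrib)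
  moreover have "int (Suc m) *s f x = f x + int m *s f x" by (simp add: vector_sadd_rdistrib)
  ultimately show ?case using Suc unfolding addh_def by metis
qed

lemma addh_smult: "addh f \<Longrightarrow> f (m *s x) = m *s f x"
proof (cases "m \<ge> 0")
  case True
  assume a: "addh f"
  then show ?thesis using addh_nat[OF a, of "nat m"] True by simp
next
  case False
  assume a: "addh f"
  define k where "k = nat (- m)"
  have m: "m = - int k" using False k_def by simp
  have "m *s x = - (int k *s x)" "m *s f x = - (int k *s f x)"
    unfolding m by (simp_all add: vec_eq_iff)
  then show ?thesis using addh_nat[OF a, of k] addh_neg[OF a] by simp
qed

lemma addh_pow: "addh f \<Longrightarrow> addh (f ^^ j)"
  by (induction j) (auto simp: addh_def)

lemma addh_inv: "bij f \<Longrightarrow> addh f \<Longrightarrow> addh (inv f)"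
  unfolding addh_def
proof (intro allI)
  fix x y
  assume b: "bij f" and a: "\<forall>x y. f (x + y) = f x + f y"
  have "f (inv f x + inv f y) = x + y" using a b by (simp add: bij_is_surj surj_f_inv_f)
  then show "inv f (x + y) = inv f x + inv f y"
    by (metis b bij_is_inj inv_f_f)
qed

lemma addh_sum: "addh f \<Longrightarrow> f (sum g A) = sum (\<lambda>i. f (g i)) A"
proof (induction A rule: infinite_finite_induct)
  case (infinite A)
  then show ?case using addh_zero by simp
next
  case empty
  then show ?case using addh_zero by simp
next
  case (insert x F)
  then show ?case unfolding addh_def by simp
qed

lemma smult_cancel: "(m::int) \<noteq> 0 \<Longrightarrow> m *s u = m *s v \<Longrightarrow> u = v"
  by (simp add: vec_eq_iff)

lemma in_cycle_of_period:
  assumes "0 < k" "(f ^^ k) a = a"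
  shows "in_cycle f a"
proof -
  define k0 where "k0 = (LEAST k. 0 < k \<and> (f ^^ k) a = a)"
  have h: "0 < k0 \<and> (f ^^ k0) a = a" unfolding k0_def
    by (rule LeastI[of _ k]) (use assms in auto)
  have "\<forall>j. 0 < j \<and> j < k0 \<longrightarrow> (f ^^ j) a \<noteq> a"
    using not_less_Least k0_def by blast
  then show ?thesis unfolding in_cycle_def in_cycle_len_def using h by blast
qed

lemma pow_mult_fix: "(f ^^ k) a = a \<Longrightarrow> (f ^^ (k * q)) a = a"
proof (induction q)
  case 0
  then show ?case by simp
next
  case (Suc q)
  have "k * Suc q = k * q + k" by simp
  then have "(f ^^ (k * Suc q)) a = (f ^^ (k * q)) ((f ^^ k) a)"
    by (metis funpow_add comp_apply)
  then show ?case using Suc by simp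
qed

definition cont :: "int ^ 'n \<Rightarrow> int" where
  "cont x = Gcd (range (\<lambda>i. x $ i))"

lemma cont_nonneg: "cont x \<ge> 0"
  unfolding cont_def by simp

lemma cont_smult: "cont (m *s x) = \<bar>m\<bar> * cont x"
proof -
  have "range (\<lambda>i. (m *s x) $ i) = (*) m ` range (\<lambda>i. x $ i)" by auto
  then show ?thesis unfolding cont_def using Gcd_mult[of m "range (\<lambda>i. x $ i)"]
    by (simp add: abs_mult)
qed

lemma cont_zero_iff: "cont x = 0 \<longleftrightarrow> x = 0"
  unfolding cont_def by (auto simp: vec_eq_iff)

lemma cont_dvd: "addh f \<Longrightarrow> cont x dvd cont (f x)"
proof -
  assume a: "addh f"
  define y where "y = (\<chi> i. x $ i div cont x)"
  have "x = cont x *s y"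
    unfolding y_def cont_def by (simp add: vec_eq_iff)
  then have "f x = cont x *s f y" using addh_smult[OF a] by metis
  then have "cont (f x) = cont x * cont (f y)" using cont_smult[of "cont x" "f y"] cont_nonneg[of x] by simp
  then show ?thesis by simp
qed

lemma cont_aut: "bij f \<Longrightarrow> addh f \<Longrightarrow> cont (f x) = cont x"
proof -
  assume b: "bij f" and a: "addh f"
  have 1: "cont x dvd cont (f x)" using cont_dvd[OF a] .
  have "cont (f x) dvd cont (inv f (f x))" using cont_dvd[OF addh_inv[OF b a]] .
  then have 2: "cont (f x) dvd cont x" by (simp add: b bij_is_inj)
  show ?thesis using 1 2 cont_nonneg by (metis zdvd_antisym_nonneg)
qed

lemma bij_pow: "bij (f :: 'a \<Rightarrow> 'a) \<Longrightarrow> bij (f ^^ j)"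
proof (induction j)
  case 0
  have "f ^^ 0 = id" by (rule ext) simp
  then show ?case using bij_id by metis
next
  case (Suc j)
  have "f ^^ Suc j = f \<circ> f ^^ j" by simp
  moreover have "bij (f \<circ> f ^^ j)" using bij_comp[of "f ^^ j" f] Suc by simp
  ultimately show ?case by (simp add: comp_def)
qed

lemma cont_pow: "bij f \<Longrightarrow> addh f \<Longrightarrow> cont ((f ^^ j) x) = cont x"
  using cont_aut[OF bij_pow addh_pow] by blast

theorem proposition3p1:
  fixes f :: "int ^ 'n \<Rightarrow> int ^ 'n"
  assumes "is_aut f"
  shows "(\<forall>k. (\<exists>C \<in> cycles_len f k. C \<noteq> {0}) \<longrightarrow> infinite (cycles_len f k))
    \<and> (chains f \<noteq> {} \<longrightarrow> infinite (chains f))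
    \<and> ((\<forall>i. in_cycle f (axis i 1)) \<longrightarrow> (\<forall>x. in_cycle f x))"
proof (intro conjI allI impI)
  have b: "bij f" and a: "addh f" using assms unfolding is_aut_def addh_def by auto
  have pz: "\<And>j. (f ^^ j) 0 = 0" using addh_zero[OF addh_pow[OF a]] by blast
  have pm: "\<And>j m x. (f ^^ j) (m *s x) = m *s (f ^^ j) x" using addh_smult[OF addh_pow[OF a]] by blast
  have injm: "inj (\<lambda>n. int (Suc n) *s x)" if xn: "x \<noteq> 0" for x :: "int ^ 'n"
  proof (rule injI)
    fix n n' assume e: "int (Suc n) *s x = int (Suc n') *s x"
    obtain i where "x $ i \<noteq> 0" using xn by (metis vec_eq_iff zero_index)
    moreover have "(int (Suc n) *s x) $ i = (int (Suc n') *s x) $ i" using e by simp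
    then have "int (Suc n) * x $ i = int (Suc n') * x $ i" by simp
    ultimately show "n = n'" by simp
  qed
  {
    fix k
    assume "\<exists>C \<in> cycles_len f k. C \<noteq> {0}"
    then obtain C a where C: "C = {(f ^^ j) a | j. j < k}" "in_cycle_len f k a" "C \<noteq> {0}"
      unfolding cycles_len_def by blast
    have k0: "0 < k" using C(2) unfolding in_cycle_len_def by simp
    have an: "a \<noteq> 0"
    proof
      assume "a = 0"
      then have "C = {0}" unfolding C(1) using pz k0 by (auto intro!: exI[of _ 0])
      then show False using C(3) by simp
    qed
    have cyc: "in_cycle_len f k (int (Suc n) *s a)" for n
    proof -
      have mz: "int (Suc n) \<noteq> 0" by simp
      have eq: "(f ^^ j) (int (Suc n) *s a) = int (Suc n) *s a \<longleftrightarrow> (f ^^ j) a = a" for j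
        unfolding pm using smult_cancel[OF mz, of "(f ^^ j) a" a] by auto
      show ?thesis using C(2) unfolding in_cycle_len_def eq .
    qed
    have sub: "range (\<lambda>n. int (Suc n) *s a) \<subseteq> \<Union> (cycles_len f k)"
    proof
      fix x assume "x \<in> range (\<lambda>n. int (Suc n) *s a)"
      then obtain n where x: "x = int (Suc n) *s a" by blast
      have "x \<in> {(f ^^ j) x | j. j < k}" using k0 by (intro CollectI exI[of _ 0]) simp
      moreover have "{(f ^^ j) x | j. j < k} \<in> cycles_len f k"
        unfolding cycles_len_def using cyc x by blast
      ultimately show "x \<in> \<Union> (cycles_len f k)" by blast
    qed
    show "infinite (cycles_len f k)"
    proof
      assume fin: "finite (cycles_len f k)"
      have "\<forall>D \<in> cycles_len f k. finite D"
      proof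
        fix D assume "D \<in> cycles_len f k"
        then obtain b where "D = {(f ^^ j) b | j. j < k}" unfolding cycles_len_def by blast
        then have "D = (\<lambda>j. (f ^^ j) b) ` {..<k}" by auto
        then show "finite D" by simp
      qed
      then have "finite (\<Union> (cycles_len f k))" using fin by blast
      then have "finite (range (\<lambda>n. int (Suc n) *s a))" using sub finite_subset by blast
      then show False using range_inj_infinite[OF injm[OF an]] by blast
    qed
  }
  {
    assume "chains f \<noteq> {}"
    then obtain a where na: "\<not> in_cycle f a" unfolding chains_def by blast
    have an: "a \<noteq> 0"
    proof
      assume "a = 0"
      then have "in_cycle f a" using in_cycle_of_period[of 1 f a] addh_zero[OF a] by simp
      then show False using na by simp
    qed
    have nc: "\<not> in_cycle f (int (Suc n) *s a)" for n
    proof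
      assume "in_cycle f (int (Suc n) *s a)"
      then obtain k where k: "0 < k" "(f ^^ k) (int (Suc n) *s a) = int (Suc n) *s a"
        unfolding in_cycle_def in_cycle_len_def by blast
      have mz: "int (Suc n) \<noteq> 0" by simp
      from k(2) have "(f ^^ k) a = a" unfolding pm using smult_cancel[OF mz, of "(f ^^ k) a" a] by auto
      then show False using in_cycle_of_period[of k f a] k(1) na by simp
    qed
    have ci: "cont ((inv f ^^ j) x) = cont x" for j x
      using cont_pow[OF bij_imp_bij_inv[OF b] addh_inv[OF b a]] by blast
    have cf: "cont ((f ^^ j) x) = cont x" for j x
      using cont_pow[OF b a] by blast
    have cc: "y \<in> chain_through f x \<Longrightarrow> cont y = cont x" for x y
      unfolding chain_through_def using ci cf by auto
    define h where "h n = chain_through f (int (Suc n) *s a)" for n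
    have ca: "cont a \<noteq> 0" using an cont_zero_iff by blast
    have "inj h"
    proof (rule injI)
      fix n n' assume e: "h n = h n'"
      have "int (Suc n) *s a \<in> h n" unfolding h_def chain_through_def
        by (intro UnI1 CollectI exI[of _ 0]) simp
      then have "int (Suc n) *s a \<in> chain_through f (int (Suc n') *s a)"
        using e unfolding h_def by simp
      then have "cont (int (Suc n) *s a) = cont (int (Suc n') *s a)"
        by (rule cc)
      then have "int (Suc n) * cont a = int (Suc n') * cont a"
        unfolding cont_smult by simp
      then show "n = n'" using ca by simp
    qed
    moreover have "range h \<subseteq> chains f" unfolding h_def chains_def using nc by blast
    ultimately show "infinite (chains f)" using range_inj_infinite finite_subset by blast
  }
  {
    fix x
    assume ax: "\<forall>i. in_cycle f (axis i 1)"
    define kk where "kk i = (SOME k. in_cycle_len f k (axis i (1::int)))" for i :: 'n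
    have kk: "in_cycle_len f (kk i) (axis i 1)" for i
    proof -
      have "\<exists>k. in_cycle_len f k (axis i 1)" using ax unfolding in_cycle_def by blast
      then show ?thesis unfolding kk_def by (rule someI_ex)
    qed
    define K where "K = (\<Prod>i\<in>UNIV. kk i)"
    have K0: "0 < K" unfolding K_def using kk unfolding in_cycle_len_def
      by (simp add: prod_pos)
    have fe: "(f ^^ K) (axis i 1) = axis i 1" for i
    proof -
      have e: "K = kk i * (\<Prod>j\<in>UNIV - {i}. kk j)" unfolding K_def
        using prod.remove[of UNIV i kk] by simp
      have p: "(f ^^ kk i) (axis i 1) = axis i 1" using kk[of i] unfolding in_cycle_len_def by blast
      show ?thesis unfolding e by (rule pow_mult_fix[OF p])
    qed
    have "(f ^^ K) x = (f ^^ K) (\<Sum>i\<in>UNIV. (x $ i) *s axis i 1)"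
      by (simp add: basis_expansion)
    also have "\<dots> = (\<Sum>i\<in>UNIV. (f ^^ K) ((x $ i) *s axis i 1))"
      by (rule addh_sum[OF addh_pow[OF a]])
    also have "\<dots> = (\<Sum>i\<in>UNIV. (x $ i) *s axis i 1)" by (simp only: pm fe)
    also have "\<dots> = x" by (rule basis_expansion)
    finally show "in_cycle f x" by (rule in_cycle_of_period[OF K0])
  }
qed

end
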